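(* Let $p(\mathbf x)=W_2\rho_{r_1}(W_1\mathbf x)$ be a two-layer hPNN with architecture $((d_0,d_1,d_2),(r_1))$, $d_0,d_1,d_2\ge 2$, $r_1\ge 2$, such that $\operatorname{krank}(W_2)\ge 2$, $\operatorname{krank}(W_1^T)\ge 2$ and $$r_1\ \ge\ 2\left\lceil\frac{2d_1-\operatorname{krank}(W_2)}{2\operatorname{krank}(W_1^T)-2}\right\rceil.$$ Then the representation $(W_1,W_2)$ of $p$ is unique.
   Context: Work over $\mathbb R$. $\rho_r(z_1,\dots,z_d)=(z_1^r,\dots,z_d^r)$. A two-layer hPNN with architecture $((d_0,d_1,d_2),(r_1))$ and weights $(W_1,W_2)$, $W_1\in\mathbb R^{d_1\times d_0}$, $W_2\in\mathbb R^{d_2\times d_1}$, is the map $\mathbf x\mapsto W_2\rho_{r_1}(W_1\mathbf x)$. Weights $(W_1',W_2')$ are equivalent to $(W_1,W_2)$ if $W_1'=PDW_1$ and $W_2'=W_2D^{-r_1}P^T$ for some permutation matrix $P$ and invertible diagonal matrix $D$. The representation is unique if every weight pair of the same architecture defining the same function is equivalent to it. The Kruskal rank $\operatorname{krank}(A)$ of a matrix $A$ is the largest integer $k$ such that every set of $k$ columns of $A$ is linearly independent. *)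

theory Defs
  imports "HOL-Analysis.Analysis"
begin

definition rho :: "nat \<Rightarrow> real^'n \<Rightarrow> real^'n" where
  "rho r z = (\<chi> i. (z $ i) ^ r)"

definition hpnn2 :: "real^'d0^'d1 \<Rightarrow> real^'d1^'d2 \<Rightarrow> nat \<Rightarrow> real^'d0 \<Rightarrow> real^'d2" where
  "hpnn2 W1 W2 r x = W2 *v rho r (W1 *v x)"

definition krank :: "real^'c^'m \<Rightarrow> nat" where
  "krank A = Max {k. k \<le> CARD('c) \<and>
     (\<forall>S::'c set. card S = k \<longrightarrow>
        inj_on (\<lambda>j. column j A) S \<and> independent ((\<lambda>j. column j A) ` S))}"

definition diagm :: "real^'n \<Rightarrow> real^'n^'n" where
  "diagm d = (\<chi> i j. if i = j then d $ i else 0)"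

definition perm_matrix :: "real^'n^'n \<Rightarrow> bool" where
  "perm_matrix P \<longleftrightarrow> (\<exists>\<sigma>. \<sigma> permutes (UNIV::'n set) \<and>
      P = (\<chi> i j. if j = \<sigma> i then 1 else 0))"

definition hpnn2_equiv :: "nat \<Rightarrow> real^'d0^'d1 \<Rightarrow> real^'d1^'d2 \<Rightarrow> real^'d0^'d1 \<Rightarrow> real^'d1^'d2 \<Rightarrow> bool" where
  "hpnn2_equiv r W1' W2' W1 W2 \<longleftrightarrow>
     (\<exists>P d. perm_matrix P \<and> (\<forall>i. d $ i \<noteq> 0) \<and>
        W1' = P ** diagm d ** W1 \<and>
        W2' = W2 ** diagm (\<chi> i. inverse (d $ i) ^ r) ** transpose P)"

definition hpnn2_unique :: "nat \<Rightarrow> real^'d0^'d1 \<Rightarrow> real^'d1^'d2 \<Rightarrow> bool" where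
  "hpnn2_unique r W1 W2 \<longleftrightarrow>
     (\<forall>(W1'::real^'d0^'d1) (W2'::real^'d1^'d2).
        hpnn2 W1' W2' r = hpnn2 W1 W2 r \<longrightarrow> hpnn2_equiv r W1' W2' W1 W2)"

end

theory Submission
  imports Defs
begin

lemma sep_vec:
  fixes v :: "'a::euclidean_space"
  assumes "v \<notin> span S"
  shows "\<exists>y. (\<forall>s\<in>S. y \<bullet> s = 0) \<and> y \<bullet> v \<noteq> 0"
proof -
  obtain p q where p: "p \<in> span S" and q: "\<And>u. u \<in> span S \<Longrightarrow> orthogonal q u" and v: "v = p + q"
    using orthogonal_subspace_decomp_exists by blast
  have "q \<noteq> 0" using assms p v by auto
  have "q \<bullet> v = q \<bullet> q" using q[OF p] v by (simp add: inner_add_right orthogonal_def)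
  then have "q \<bullet> v \<noteq> 0" using \<open>q \<noteq> 0\<close> by simp
  moreover have "\<forall>s\<in>S. q \<bullet> s = 0" using q span_base orthogonal_def by blast
  ultimately show ?thesis by blast
qed

lemma orth_span:
  fixes z :: "'a::euclidean_space"
  assumes "\<forall>s\<in>S. z \<bullet> s = 0" "u \<in> span S"
  shows "z \<bullet> u = 0"
  using orthogonal_to_span[of u S z] assms by (auto simp: orthogonal_def)

lemma avoid_vec:
  fixes F :: "'a::euclidean_space set"
  assumes "finite F" "\<forall>v\<in>F. v \<notin> span S"
  shows "\<exists>z. (\<forall>s\<in>S. z \<bullet> s = 0) \<and> (\<forall>v\<in>F. z \<bullet> v \<noteq> 0)"
  using assms
proof (induction F rule: finite_induct)
  case empty
  show ?case by (rule exI[of _ 0]) simp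
next
  case (insert v F)
  then obtain z where z1: "\<forall>s\<in>S. z \<bullet> s = 0" and z2: "\<forall>f\<in>F. z \<bullet> f \<noteq> 0" by auto
  obtain y where y1: "\<forall>s\<in>S. y \<bullet> s = 0" and y2: "y \<bullet> v \<noteq> 0"
    using sep_vec insert.prems by blast
  let ?B = "(\<lambda>f. - (z \<bullet> f) / (y \<bullet> f)) ` (insert v F)"
  have "finite ?B" using insert.hyps by simp
  then obtain c where c: "c \<notin> ?B" using ex_new_if_finite[of ?B] infinite_UNIV_char_0 by blast
  have "(z + c *\<^sub>R y) \<bullet> f \<noteq> 0" if f: "f \<in> insert v F" for f
  proof
    assume h: "(z + c *\<^sub>R y) \<bullet> f = 0"
    then have h2: "z \<bullet> f + c * (y \<bullet> f) = 0" by (simp add: inner_add_left)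
    show False
    proof (cases "y \<bullet> f = 0")
      case True
      then have "z \<bullet> f = 0" using h2 by simp
      then show False using True f y2 z2 by auto
    next
      case False
      then have "c = - (z \<bullet> f) / (y \<bullet> f)" using h2 by (simp add: field_simps)
      then show False using c f by auto
    qed
  qed
  moreover have "\<forall>s\<in>S. (z + c *\<^sub>R y) \<bullet> s = 0" using z1 y1 by (simp add: inner_add_left)
  ultimately show ?case by blast
qed

definition prodL :: "'a::real_inner list \<Rightarrow> 'a \<Rightarrow> real" where
  "prodL ys u = prod_list (map (\<lambda>y. y \<bullet> u) ys)"

lemma prodL_Nil[simp]: "prodL [] u = 1" by (simp add: prodL_def)
lemma prodL_Cons[simp]: "prodL (y # ys) u = (y \<bullet> u) * prodL ys u" by (simp add: prodL_def)

lemma deriv_side: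
  fixes u :: "'j \<Rightarrow> 'a::real_inner"
  shows "((\<lambda>h. \<Sum>j\<in>A. c j * (u j \<bullet> (x + h *\<^sub>R y)) ^ Suc N) has_real_derivative
          (\<Sum>j\<in>A. c j * (of_nat (Suc N) * ((u j \<bullet> y) * (u j \<bullet> x) ^ N)))) (at 0)"
proof -
  have e: "(\<lambda>h. \<Sum>j\<in>A. c j * (u j \<bullet> (x + h *\<^sub>R y)) ^ Suc N) =
        (\<lambda>h. \<Sum>j\<in>A. c j * (u j \<bullet> x + h * (u j \<bullet> y)) ^ Suc N)"
    by (simp add: inner_add_right)
  have d: "((\<lambda>h. u j \<bullet> x + h * (u j \<bullet> y)) has_real_derivative (u j \<bullet> y)) (at 0)" for j
    using DERIV_add[OF DERIV_const[of "u j \<bullet> x"] DERIV_cmult_Id[of "u j \<bullet> y"]] by (simp add: mult.commute)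
  have "((\<lambda>h. \<Sum>j\<in>A. c j * (u j \<bullet> x + h * (u j \<bullet> y)) ^ Suc N) has_real_derivative
          (\<Sum>j\<in>A. c j * (of_nat (Suc N) * ((u j \<bullet> y) * (u j \<bullet> x + 0 * (u j \<bullet> y)) ^ (Suc N - Suc 0))))) (at 0)"
    by (rule DERIV_sum, rule DERIV_cmult, rule DERIV_power, rule d)
  then show ?thesis unfolding e by simp
qed

lemma contract1:
  fixes u :: "'j \<Rightarrow> 'a::real_inner" and v :: "'i \<Rightarrow> 'a"
  assumes "\<forall>x. (\<Sum>j\<in>A. c j * (u j \<bullet> x) ^ Suc N) = (\<Sum>i\<in>B. d i * (v i \<bullet> x) ^ Suc N)"
  shows "(\<Sum>j\<in>A. c j * (y \<bullet> u j) * (u j \<bullet> x) ^ N) = (\<Sum>i\<in>B. d i * (y \<bullet> v i) * (v i \<bullet> x) ^ N)"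
proof -
  have f: "(\<lambda>h. \<Sum>j\<in>A. c j * (u j \<bullet> (x + h *\<^sub>R y)) ^ Suc N) = (\<lambda>h. \<Sum>i\<in>B. d i * (v i \<bullet> (x + h *\<^sub>R y)) ^ Suc N)"
    using assms by auto
  have "(\<Sum>j\<in>A. c j * (of_nat (Suc N) * ((u j \<bullet> y) * (u j \<bullet> x) ^ N))) =
        (\<Sum>i\<in>B. d i * (of_nat (Suc N) * ((v i \<bullet> y) * (v i \<bullet> x) ^ N)))"
  proof -
    note D1 = deriv_side[of c u x y N A]
    note D2 = deriv_side[of d v x y N B]
    show ?thesis by (rule DERIV_unique[OF D1[unfolded f] D2])
  qed
  then have "of_nat (Suc N) * (\<Sum>j\<in>A. c j * (y \<bullet> u j) * (u j \<bullet> x) ^ N) =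
        of_nat (Suc N) * (\<Sum>i\<in>B. d i * (y \<bullet> v i) * (v i \<bullet> x) ^ N)"
    by (simp add: sum_distrib_left algebra_simps inner_commute)
  then show ?thesis by simp
qed

lemma contract_list:
  fixes u :: "'j \<Rightarrow> 'a::real_inner" and v :: "'i \<Rightarrow> 'a"
  assumes "\<forall>x. (\<Sum>j\<in>A. c j * (u j \<bullet> x) ^ N) = (\<Sum>i\<in>B. d i * (v i \<bullet> x) ^ N)"
    and "length ys \<le> N"
  shows "\<forall>x. (\<Sum>j\<in>A. c j * prodL ys (u j) * (u j \<bullet> x) ^ (N - length ys)) =
             (\<Sum>i\<in>B. d i * prodL ys (v i) * (v i \<bullet> x) ^ (N - length ys))"
  using assms(2)
proof (induction ys)
  case Nil
  then show ?case using assms(1) by simp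
next
  case (Cons y ys)
  then have IH: "\<forall>x. (\<Sum>j\<in>A. c j * prodL ys (u j) * (u j \<bullet> x) ^ Suc (N - length (y # ys))) =
             (\<Sum>i\<in>B. d i * prodL ys (v i) * (v i \<bullet> x) ^ Suc (N - length (y # ys)))"
    by (simp add: Suc_diff_Suc)
  show ?case
  proof
    fix x
    show "(\<Sum>j\<in>A. c j * prodL (y # ys) (u j) * (u j \<bullet> x) ^ (N - length (y # ys))) =
          (\<Sum>i\<in>B. d i * prodL (y # ys) (v i) * (v i \<bullet> x) ^ (N - length (y # ys)))"
    proof -
      have *: "\<And>(a::real) b c d e. a * b * c * e = a * (c * b) * e" by simp
      show ?thesis using contract1[OF IH, of y x] by (simp only: prodL_Cons *)
    qed
  qed
qed

lemma sep_krank: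
  fixes w :: "'j::finite \<Rightarrow> 'a::euclidean_space"
  assumes KW: "\<forall>S. card S \<le> k \<longrightarrow> inj_on w S \<and> independent (w ` S)"
    and "card K + 1 \<le> k" "j0 \<notin> K"
  shows "\<exists>y. (\<forall>j\<in>K. y \<bullet> w j = 0) \<and> y \<bullet> w j0 \<noteq> 0"
proof -
  have fin: "finite K" by simp
  have "card (insert j0 K) \<le> k" using assms(2,3) fin by simp
  then have i: "inj_on w (insert j0 K)" and ind: "independent (w ` insert j0 K)" using KW by blast+
  have "w j0 \<notin> w ` K" using i assms(3) by (auto simp: inj_on_def)
  moreover have "independent (insert (w j0) (w ` K))" using ind by simp
  ultimately have "w j0 \<notin> span (w ` K)" by (simp add: independent_insert)
  then obtain y where "\<forall>s\<in>w ` K. y \<bullet> s = 0" "y \<bullet> w j0 \<noteq> 0" using sep_vec by blast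
  then show ?thesis by auto
qed

lemma multi_sep:
  fixes w :: "'j::finite \<Rightarrow> 'a::euclidean_space"
  assumes KW: "\<forall>S. card S \<le> k \<longrightarrow> inj_on w S \<and> independent (w ` S)"
    and k: "1 \<le> k"
  shows "card K \<le> e * (k - 1) \<Longrightarrow> j0 \<notin> K \<Longrightarrow>
    \<exists>ys. length ys = e \<and> (\<forall>j\<in>K. prodL ys (w j) = 0) \<and> prodL ys (w j0) \<noteq> 0"
proof (induction e arbitrary: K)
  case 0
  then have "K = {}" by simp
  then show ?case by (intro exI[of _ "[]"]) simp
next
  case (Suc e)
  obtain K1 where K1: "K1 \<subseteq> K" "card K1 = min (card K) (k - 1)"
    using obtain_subset_with_card_n[of "min (card K) (k - 1)" K] by auto
  have "card K1 + 1 \<le> k" using K1 k by simp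
  moreover have "j0 \<notin> K1" using K1 Suc.prems by auto
  ultimately obtain y where y1: "\<forall>j\<in>K1. y \<bullet> w j = 0" and y2: "y \<bullet> w j0 \<noteq> 0"
    using sep_krank[OF KW] by blast
  have cK: "card (K - K1) = card K - card K1" using K1 by (simp add: card_Diff_subset)
  have "card (K - K1) \<le> e * (k - 1)"
  proof (cases "card K \<le> k - 1")
    case True then show ?thesis using cK K1 by simp
  next
    case False then show ?thesis using cK K1 Suc.prems by simp
  qed
  then obtain ys where ys: "length ys = e" "\<forall>j\<in>K - K1. prodL ys (w j) = 0" "prodL ys (w j0) \<noteq> 0"
    using Suc.IH Suc.prems by blast
  show ?case
    by (rule exI[of _ "y # ys"]) (use ys y1 y2 in auto)
qed

lemma IND:
  fixes w :: "'j::finite \<Rightarrow> 'a::euclidean_space"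
  assumes KW: "\<forall>S. card S \<le> k \<longrightarrow> inj_on w S \<and> independent (w ` S)"
    and k: "1 \<le> k"
  shows "card S \<le> n * (k - 1) + 1 \<Longrightarrow> \<forall>x. (\<Sum>j\<in>S. c j * (w j \<bullet> x) ^ n) = 0 \<Longrightarrow> \<forall>j\<in>S. c j = 0"
proof (induction n arbitrary: S c)
  case 0
  show ?case
  proof
    fix j assume j: "j \<in> S"
    have "card S \<le> 1" using 0 by simp
    then have "S = {j}" using j using card_le_Suc0_iff_eq[of S] by auto
    then show "c j = 0" using 0 by simp
  qed
next
  case (Suc n)
  show ?case
  proof
    fix j0 assume j0: "j0 \<in> S"
    obtain T where T: "T \<subseteq> S - {j0}" "card T = min (card S - 1) (k - 1)"
      using obtain_subset_with_card_n[of "min (card S - 1) (k - 1)" "S - {j0}"] j0 by auto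
    have "card T + 1 \<le> k" using T k by simp
    moreover have "j0 \<notin> T" using T by auto
    ultimately obtain y where y1: "\<forall>j\<in>T. y \<bullet> w j = 0" and y2: "y \<bullet> w j0 \<noteq> 0"
      using sep_krank[OF KW] by blast
    have "\<forall>x. (\<Sum>j\<in>S. c j * (y \<bullet> w j) * (w j \<bullet> x) ^ n) = (\<Sum>i\<in>{}. 0 * (y \<bullet> w i) * (w i \<bullet> x) ^ n)"
      using contract1[where A=S and c=c and u=w and N=n and B="{}" and d="\<lambda>_. 0" and v=w] Suc.prems(2) by simp
    then have h: "\<forall>x. (\<Sum>j\<in>S. c j * (y \<bullet> w j) * (w j \<bullet> x) ^ n) = 0" by simp
    have "\<forall>x. (\<Sum>j\<in>S - T. c j * (y \<bullet> w j) * (w j \<bullet> x) ^ n) = 0"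
    proof
      fix x
      have "(\<Sum>j\<in>S. c j * (y \<bullet> w j) * (w j \<bullet> x) ^ n) = (\<Sum>j\<in>S - T. c j * (y \<bullet> w j) * (w j \<bullet> x) ^ n)"
        by (rule sum.mono_neutral_right) (use T y1 in auto)
      then show "(\<Sum>j\<in>S - T. c j * (y \<bullet> w j) * (w j \<bullet> x) ^ n) = 0" using h by simp
    qed
    moreover have "card (S - T) \<le> n * (k - 1) + 1"
    proof -
      have "T \<subseteq> S" using T by auto
      then have cST: "card (S - T) = card S - card T" by (simp add: card_Diff_subset)
      have "card S \<ge> 1" using j0 by (metis card_0_eq empty_iff finite less_one not_le)
      then show ?thesis using cST T Suc.prems(1) by (cases "card S - 1 \<le> k - 1") (auto simp: min_def)
    qed
    ultimately have "\<forall>j\<in>S - T. c j * (y \<bullet> w j) = 0"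
      using Suc.IH[of "S - T" "\<lambda>j. c j * (y \<bullet> w j)"] by blast
    then show "c j0 = 0" using j0 \<open>j0 \<notin> T\<close> y2 by auto
  qed
qed

lemma rows_bound:
  fixes row :: "'k \<Rightarrow> real^'j"
  assumes fY: "finite Y"
    and indep: "\<forall>g. (\<Sum>y\<in>Y. g y *\<^sub>R row y) = 0 \<longrightarrow> (\<forall>y\<in>Y. g y = 0)"
    and supp: "\<forall>y\<in>Y. \<forall>i. i \<notin> I \<longrightarrow> row y $ i = 0"
  shows "card Y \<le> card I"
proof -
  have inj: "inj_on row Y"
  proof (rule inj_onI, rule ccontr)
    fix p q assume pq: "p \<in> Y" "q \<in> Y" "row p = row q" "p \<noteq> q"
    define g where "g y = (if y = p then 1 else if y = q then -1 else (0::real))" for y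
    have "(\<Sum>y\<in>Y. g y *\<^sub>R row y) = (\<Sum>y\<in>{p,q}. g y *\<^sub>R row y)"
      by (rule sum.mono_neutral_right) (use fY pq in \<open>auto simp: g_def\<close>)
    also have "\<dots> = 0" using pq by (simp add: g_def)
    finally have "g p = 0" using indep pq by blast
    then show False by (simp add: g_def)
  qed
  have ind: "independent (row ` Y)"
  proof (rule independent_if_scalars_zero)
    show "finite (row ` Y)" using fY by simp
    fix f x assume s: "(\<Sum>x\<in>row ` Y. f x *\<^sub>R x) = 0" and x: "x \<in> row ` Y"
    have "(\<Sum>y\<in>Y. f (row y) *\<^sub>R row y) = 0" using s by (simp add: sum.reindex[OF inj])
    then have "\<forall>y\<in>Y. f (row y) = 0" using indep[rule_format, of "\<lambda>y. f (row y)"] by blast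
    then show "f x = 0" using x by auto
  qed
  have sub: "row ` Y \<subseteq> span ((\<lambda>i. axis i (1::real)) ` I)"
  proof
    fix v assume "v \<in> row ` Y"
    then obtain y where y: "y \<in> Y" "v = row y" by auto
    have "v = (\<Sum>i\<in>I. (v $ i) *\<^sub>R axis i 1)"
    proof -
      have "v = (\<Sum>i\<in>UNIV. (v $ i) *\<^sub>R axis i 1)"
        by (simp add: vec_eq_iff axis_def sum.delta if_distrib cong: if_cong)
      also have "\<dots> = (\<Sum>i\<in>I. (v $ i) *\<^sub>R axis i 1)"
        by (rule sum.mono_neutral_right) (use y supp in auto)
      finally show ?thesis .
    qed
    also have "\<dots> \<in> span ((\<lambda>i. axis i (1::real)) ` I)"
      by (intro span_sum span_mul span_base) auto
    finally show "v \<in> span ((\<lambda>i. axis i (1::real)) ` I)" .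
  qed
  have "card (row ` Y) \<le> card ((\<lambda>i. axis i (1::real)) ` I)"
    using independent_span_bound[OF _ ind sub] by simp
  also have "\<dots> \<le> card I" by (rule card_image_le) simp
  finally show ?thesis using card_image[OF inj] by simp
qed

lemma numeric_split:
  fixes R r k1 k2 :: nat
  assumes "2 \<le> k1" "1 \<le> R" "k1 \<le> R" "k2 \<le> R" "2 * R \<le> r * (k1 - 1) + k2"
  shows "\<exists>n e. n + e + 1 = r \<and> R + 2 \<le> k2 + e * (k1 - 1) + k1 \<and> R + 2 \<le> n * (k1 - 1) + 1 + k1
     \<and> 2 * R + 2 \<le> (k2 + e * (k1 - 1)) + (n * (k1 - 1) + 1) + k1"
proof -
  define q where "q = k1 - 1"
  have q1: "1 \<le> q" using assms q_def by simp
  define n where "n = (R - 1) div q"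
  have D: "n * q + (R - 1) mod q = R - 1" unfolding n_def by (rule div_mult_mod_eq)
  have M: "(R - 1) mod q < q" using q1 by simp
  have B1: "n * q \<le> R - 1" using D by linarith
  have B2: "R - 1 < n * q + q" using D M by linarith
  have rq: "2 * R \<le> r * q + k2" using assms q_def by simp
  have "n < r"
  proof (rule ccontr)
    assume "\<not> n < r"
    then have "r * q \<le> n * q" using mult_le_mono1[of r n q] by linarith
    then show False using B1 rq assms q_def by linarith
  qed
  define e where "e = r - 1 - n"
  have ne: "n + e + 1 = r" using \<open>n < r\<close> e_def by simp
  have C0: "(n + e + 1) * q = n * q + e * q + q" by (simp only: add_mult_distrib mult_1)
  have C: "e * q + n * q + q = r * q" using C0 ne by (metis add.commute)
  have "R + 2 \<le> k2 + e * q + k1" using C B1 B2 rq q_def assms by linarith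
  moreover have "R + 2 \<le> n * q + 1 + k1" using B2 q_def assms by linarith
  moreover have "2 * R + 2 \<le> (k2 + e * q) + (n * q + 1) + k1" using C rq q_def assms by linarith
  ultimately show ?thesis using ne q_def by blast
qed

lemma KEY_w:
  fixes w m :: "'j::finite \<Rightarrow> 'a::euclidean_space" and a b :: "'j \<Rightarrow> 'b::euclidean_space"
  assumes ID: "\<forall>l x. (\<Sum>j\<in>UNIV. (l \<bullet> a j) * (w j \<bullet> x) ^ r) = (\<Sum>j\<in>UNIV. (l \<bullet> b j) * (m j \<bullet> x) ^ r)"
    and KW: "\<forall>S. card S \<le> k1 \<longrightarrow> inj_on w S \<and> independent (w ` S)"
    and KA: "\<forall>S. card S \<le> k2 \<longrightarrow> inj_on a S \<and> independent (a ` S)"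
    and k1: "2 \<le> k1" and k2: "2 \<le> k2" and k1R: "k1 \<le> CARD('j)" and k2R: "k2 \<le> CARD('j)"
    and rk: "2 * CARD('j) \<le> r * (k1 - 1) + k2"
  shows "min (card {j. z \<bullet> w j \<noteq> 0}) (CARD('j) + 2 - k1) \<le> card {i. z \<bullet> m i \<noteq> 0}"
proof -
  let ?R = "CARD('j)"
  obtain n e where ne: "n + e + 1 = r" and P1: "?R + 2 \<le> k2 + e * (k1 - 1) + k1"
    and Q1: "?R + 2 \<le> n * (k1 - 1) + 1 + k1"
    and PQ: "2 * ?R + 2 \<le> (k2 + e * (k1 - 1)) + (n * (k1 - 1) + 1) + k1"
    using numeric_split[of k1 ?R k2 r] k1 k1R k2R rk by auto
  define P where "P = k2 + e * (k1 - 1)"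
  define Q where "Q = n * (k1 - 1) + 1"
  have P1': "?R + 2 \<le> P + k1" and Q1': "?R + 2 \<le> Q + k1" and PQ': "2 * ?R + 2 \<le> P + Q + k1"
    using P1 Q1 PQ unfolding P_def Q_def by auto
  define J where "J = {j. z \<bullet> w j \<noteq> 0}"
  define \<omega> where "\<omega> = card J"
  have \<omega>R: "\<omega> \<le> ?R" unfolding \<omega>_def by (rule card_mono) auto
  obtain X where X: "X \<subseteq> J" "card X = \<omega> - min \<omega> P"
    using obtain_subset_with_card_n[of "\<omega> - min \<omega> P" J] \<omega>_def by auto
  have cJX: "card (J - X) = \<omega> - card X" using X \<omega>_def by (simp add: card_Diff_subset)
  have XQ: "card X \<le> Q" using X \<omega>R PQ' k1R by (auto simp: min_def)
  obtain Y where Y: "Y \<subseteq> J - X" "card Y = min (\<omega> - card X) (Q - card X)"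
    using obtain_subset_with_card_n[of "min (\<omega> - card X) (Q - card X)" "J - X"] cJX by auto
  have XYQ: "card (X \<union> Y) \<le> Q"
  proof -
    have "card (X \<union> Y) = card X + card Y" using Y by (intro card_Un_disjoint) auto
    then show ?thesis using Y XQ by simp
  qed
  have Ybig: "min \<omega> (?R + 2 - k1) \<le> card Y"
    using Y X P1' Q1' PQ' \<omega>R k1R by (auto simp: min_def)
  define K where "K j0 = (J - X) - {j0}" for j0
  have cK: "card (K j0) + 1 \<le> P" if "j0 \<in> Y" for j0
  proof -
    have "j0 \<in> J - X" using Y that by auto
    then have "card (K j0) = card (J - X) - 1" unfolding K_def by simp
    moreover have "card (J - X) \<ge> 1" using \<open>j0 \<in> J - X\<close> by (metis card_0_eq empty_iff finite less_one not_le)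
    ultimately show ?thesis using cJX X by (auto simp: min_def)
  qed
  have ex: "\<exists>l ys. length ys = e \<and> l \<bullet> a j0 \<noteq> 0 \<and> prodL ys (w j0) \<noteq> 0 \<and>
             (\<forall>j\<in>K j0. l \<bullet> a j = 0 \<or> prodL ys (w j) = 0)" if j0: "j0 \<in> Y" for j0
  proof -
    obtain Ka where Ka: "Ka \<subseteq> K j0" "card Ka = min (card (K j0)) (k2 - 1)"
      using obtain_subset_with_card_n[of "min (card (K j0)) (k2 - 1)" "K j0"] by auto
    have nK: "j0 \<notin> K j0" unfolding K_def by simp
    have "card Ka + 1 \<le> k2" using Ka k2 by simp
    then obtain l where l1: "\<forall>j\<in>Ka. l \<bullet> a j = 0" and l2: "l \<bullet> a j0 \<noteq> 0"
      using sep_krank[OF KA, of Ka j0] nK Ka by auto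
    have cKw: "card (K j0 - Ka) \<le> e * (k1 - 1)"
    proof -
      have "card (K j0 - Ka) = card (K j0) - card Ka" using Ka by (simp add: card_Diff_subset)
      then show ?thesis using Ka cK[OF j0] P_def by (auto simp: min_def)
    qed
    obtain ys where ys: "length ys = e" "\<forall>j\<in>K j0 - Ka. prodL ys (w j) = 0" "prodL ys (w j0) \<noteq> 0"
      using multi_sep[OF KW, of "K j0 - Ka" e j0] k1 cKw nK by auto
    show ?thesis using l1 l2 ys by blast
  qed
  have ex2: "\<forall>j0\<in>Y. \<exists>l ys. length ys = e \<and> l \<bullet> a j0 \<noteq> 0 \<and> prodL ys (w j0) \<noteq> 0 \<and>
             (\<forall>j\<in>K j0. l \<bullet> a j = 0 \<or> prodL ys (w j) = 0)" using ex by blast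
  from bchoice[OF ex2] obtain LAM where L1: "\<forall>j0\<in>Y. \<exists>ys. length ys = e \<and> LAM j0 \<bullet> a j0 \<noteq> 0 \<and> prodL ys (w j0) \<noteq> 0 \<and>
             (\<forall>j\<in>K j0. LAM j0 \<bullet> a j = 0 \<or> prodL ys (w j) = 0)" by blast
  from bchoice[OF L1] obtain YS where LY: "\<forall>j0\<in>Y. length (YS j0) = e \<and> LAM j0 \<bullet> a j0 \<noteq> 0 \<and> prodL (YS j0) (w j0) \<noteq> 0 \<and>
             (\<forall>j\<in>K j0. LAM j0 \<bullet> a j = 0 \<or> prodL (YS j0) (w j) = 0)" by blast
  define cL where "cL j0 j = (LAM j0 \<bullet> a j) * prodL (z # YS j0) (w j)" for j0 j
  define cR where "cR j0 i = (LAM j0 \<bullet> b i) * prodL (z # YS j0) (m i)" for j0 i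
  have contr: "\<forall>x. (\<Sum>j\<in>UNIV. cL j0 j * (w j \<bullet> x) ^ n) = (\<Sum>i\<in>UNIV. cR j0 i * (m i \<bullet> x) ^ n)"
    if j0: "j0 \<in> Y" for j0
  proof -
    have len: "length (z # YS j0) = e + 1" using LY j0 by simp
    have "\<forall>x. (\<Sum>j\<in>UNIV. (LAM j0 \<bullet> a j) * prodL (z # YS j0) (w j) * (w j \<bullet> x) ^ (r - length (z # YS j0))) =
             (\<Sum>i\<in>UNIV. (LAM j0 \<bullet> b i) * prodL (z # YS j0) (m i) * (m i \<bullet> x) ^ (r - length (z # YS j0)))"
      by (rule contract_list) (use ID len ne in auto)
    moreover have "r - length (z # YS j0) = n" using len ne by simp
    ultimately show ?thesis unfolding cL_def cR_def by simp
  qed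
  have cL0: "cL j0 j = 0" if "j0 \<in> Y" "j \<notin> X" "j \<noteq> j0" for j0 j
  proof (cases "j \<in> J")
    case False
    then show ?thesis unfolding cL_def J_def by simp
  next
    case True
    then have "j \<in> K j0" unfolding K_def using that by auto
    then show ?thesis using LY that(1) unfolding cL_def by auto
  qed
  have cLj: "cL j0 j0 \<noteq> 0" if "j0 \<in> Y" for j0
    using LY that Y unfolding cL_def J_def by auto
  define row where "row j0 = (\<chi> i. cR j0 i)" for j0
  have indep: "\<forall>g. (\<Sum>y\<in>Y. g y *\<^sub>R row y) = 0 \<longrightarrow> (\<forall>y\<in>Y. g y = 0)"
  proof (intro allI impI)
    fix g assume g: "(\<Sum>y\<in>Y. g y *\<^sub>R row y) = 0"
    have gi: "(\<Sum>y\<in>Y. g y * cR y i) = 0" for i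
    proof -
      have "(\<Sum>y\<in>Y. g y *\<^sub>R row y) $ i = 0" using g by simp
      then show ?thesis unfolding row_def by simp
    qed
    define D where "D j = (\<Sum>y\<in>Y. g y * cL y j)" for j
    have "\<forall>x. (\<Sum>j\<in>X \<union> Y. D j * (w j \<bullet> x) ^ n) = 0"
    proof
      fix x
      have "(\<Sum>j\<in>X \<union> Y. D j * (w j \<bullet> x) ^ n) = (\<Sum>j\<in>UNIV. D j * (w j \<bullet> x) ^ n)"
      proof (rule sum.mono_neutral_left)
        show "\<forall>j\<in>UNIV - (X \<union> Y). D j * (w j \<bullet> x) ^ n = 0"
        proof
          fix j assume "j \<in> UNIV - (X \<union> Y)"
          then have "\<forall>y\<in>Y. cL y j = 0" using cL0 by auto
          then show "D j * (w j \<bullet> x) ^ n = 0" unfolding D_def by simp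
        qed
      qed auto
      also have "\<dots> = (\<Sum>y\<in>Y. g y * (\<Sum>j\<in>UNIV. cL y j * (w j \<bullet> x) ^ n))"
        unfolding D_def by (simp add: sum_distrib_left sum_distrib_right sum.swap[of _ Y] mult.assoc)
      also have "\<dots> = (\<Sum>y\<in>Y. g y * (\<Sum>i\<in>UNIV. cR y i * (m i \<bullet> x) ^ n))"
        by (rule sum.cong) (use contr in auto)
      also have "\<dots> = (\<Sum>i\<in>UNIV. (\<Sum>y\<in>Y. g y * cR y i) * (m i \<bullet> x) ^ n)"
        by (simp add: sum_distrib_left sum_distrib_right sum.swap[of _ Y] mult.assoc)
      also have "\<dots> = 0" using gi by simp
      finally show "(\<Sum>j\<in>X \<union> Y. D j * (w j \<bullet> x) ^ n) = 0" .
    qed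
    then have D0: "\<forall>j\<in>X \<union> Y. D j = 0"
      using IND[OF KW, where n=n and S="X \<union> Y" and c=D] k1 XYQ Q_def by auto
    show "\<forall>y\<in>Y. g y = 0"
    proof
      fix y assume y: "y \<in> Y"
      have "D y = (\<Sum>y'\<in>{y}. g y' * cL y' y)" unfolding D_def
      proof (rule sum.mono_neutral_right)
        show "\<forall>i\<in>Y - {y}. g i * cL i y = 0"
        proof
          fix i assume i: "i \<in> Y - {y}"
          have "y \<notin> X" using y Y by auto
          then show "g i * cL i y = 0" using cL0[of i y] i by auto
        qed
      qed (use y in auto)
      then have "g y * cL y y = 0" using D0 y by simp
      then show "g y = 0" using cLj[OF y] by simp
    qed
  qed
  have supp: "\<forall>y\<in>Y. \<forall>i. i \<notin> {i. z \<bullet> m i \<noteq> 0} \<longrightarrow> row y $ i = 0"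
    unfolding row_def cR_def by simp
  have "card Y \<le> card {i. z \<bullet> m i \<noteq> 0}"
    by (rule rows_bound[OF _ indep supp]) simp
  then show ?thesis using Ybig unfolding \<omega>_def J_def by simp
qed

lemma base_count:
  fixes w m :: "'j::finite \<Rightarrow> 'a::euclidean_space"
  assumes KEY: "\<forall>z. min (card {j. z \<bullet> w j \<noteq> 0}) (CARD('j) + 2 - k1) \<le> card {i. z \<bullet> m i \<noteq> 0}"
    and k1R: "k1 \<le> CARD('j)"
    and big: "k1 - 1 \<le> card {i. m i \<in> span S}"
  shows "card {i. m i \<in> span S} \<le> card {j. w j \<in> span S}"
proof -
  let ?F = "m ` {i. m i \<notin> span S} \<union> w ` {j. w j \<notin> span S}"
  have fF: "finite ?F" by simp
  have nF: "\<forall>v\<in>?F. v \<notin> span S" by auto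
  obtain z where z1: "\<forall>s\<in>S. z \<bullet> s = 0" and z2: "\<forall>v\<in>?F. z \<bullet> v \<noteq> 0"
    using avoid_vec[OF fF nF] by (elim exE conjE)
  have em: "z \<bullet> m i \<noteq> 0 \<longleftrightarrow> m i \<notin> span S" for i
  proof
    assume "z \<bullet> m i \<noteq> 0" then show "m i \<notin> span S" using orth_span[OF z1, of "m i"] by blast
  next
    assume "m i \<notin> span S" then have "m i \<in> ?F" by blast
    then show "z \<bullet> m i \<noteq> 0" using z2 by blast
  qed
  have ew: "z \<bullet> w i \<noteq> 0 \<longleftrightarrow> w i \<notin> span S" for i
  proof
    assume "z \<bullet> w i \<noteq> 0" then show "w i \<notin> span S" using orth_span[OF z1, of "w i"] by blast
  next
    assume "w i \<notin> span S" then have "w i \<in> ?F" by blast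
    then show "z \<bullet> w i \<noteq> 0" using z2 by blast
  qed
  have zm: "{i. z \<bullet> m i \<noteq> 0} = {i. m i \<notin> span S}" using em by blast
  have zw: "{j. z \<bullet> w j \<noteq> 0} = {j. w j \<notin> span S}" using ew by blast
  have cm: "card {i. m i \<notin> span S} = CARD('j) - card {i. m i \<in> span S}"
    using card_Diff_subset[of "{i. m i \<in> span S}" UNIV] by (simp add: set_diff_eq)
  have cw: "card {j. w j \<notin> span S} = CARD('j) - card {j. w j \<in> span S}"
    using card_Diff_subset[of "{j. w j \<in> span S}" UNIV] by (simp add: set_diff_eq)
  have le1: "card {i. m i \<in> span S} \<le> CARD('j)" and le2: "card {j. w j \<in> span S} \<le> CARD('j)"
    by (auto intro: card_mono)
  have "min (card {j. w j \<notin> span S}) (CARD('j) + 2 - k1) \<le> card {i. m i \<notin> span S}"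
    using KEY[rule_format, of z] zm zw by simp
  then have "card {j. w j \<notin> span S} \<le> card {i. m i \<notin> span S} \<or> CARD('j) + 2 - k1 \<le> card {i. m i \<notin> span S}"
    by (simp only: min_le_iff_disj)
  then show ?thesis using cm cw big k1R le1 le2 by linarith
qed

lemma rho_ge:
  fixes w m :: "'j::finite \<Rightarrow> 'a::euclidean_space"
  assumes KEY: "\<forall>z. min (card {j. z \<bullet> w j \<noteq> 0}) (CARD('j) + 2 - k1) \<le> card {i. z \<bullet> m i \<noteq> 0}"
    and KW: "\<forall>S. card S \<le> k1 \<longrightarrow> inj_on w S \<and> independent (w ` S)"
    and k1R: "k1 \<le> CARD('j)"
  shows "k1 \<le> dim (range m)"
proof -
  have "k1 - 1 \<le> card {i. m i \<in> span (range m)}" using k1R by (simp add: span_base)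
  then have "card {i. m i \<in> span (range m)} \<le> card {j. w j \<in> span (range m)}"
    using base_count[OF KEY k1R] by blast
  then have c: "CARD('j) \<le> card {j. w j \<in> span (range m)}" by (simp add: span_base)
  have allw: "\<forall>j. w j \<in> span (range m)"
  proof (rule ccontr)
    assume "\<not> (\<forall>j. w j \<in> span (range m))"
    then obtain j where "w j \<notin> span (range m)" by auto
    then have "{j. w j \<in> span (range m)} \<subset> UNIV" by auto
    then have "card {j. w j \<in> span (range m)} < CARD('j)" by (simp add: psubset_card_mono)
    then show False using c by simp
  qed
  obtain S0 :: "'j set" where S0: "card S0 = k1"
    using obtain_subset_with_card_n[of k1 "UNIV :: 'j set"] k1R by auto
  have "inj_on w S0" "independent (w ` S0)" using KW S0 by auto
  moreover have "w ` S0 \<subseteq> span (range m)" using allw by auto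
  ultimately have "card (w ` S0) \<le> dim (span (range m))" using independent_card_le_dim by blast
  then show ?thesis using S0 \<open>inj_on w S0\<close> by (simp add: card_image)
qed

lemma JS:
  fixes w m :: "'j::finite \<Rightarrow> 'a::euclidean_space"
  assumes KEY: "\<forall>z. min (card {j. z \<bullet> w j \<noteq> 0}) (CARD('j) + 2 - k1) \<le> card {i. z \<bullet> m i \<noteq> 0}"
    and KW: "\<forall>S. card S \<le> k1 \<longrightarrow> inj_on w S \<and> independent (w ` S)"
    and k1R: "k1 \<le> CARD('j)"
  shows "k1 - 1 - dim (m ` T) \<le> N \<Longrightarrow>
     card {i. m i \<in> span (m ` T)} \<le> card {j. w j \<in> span (m ` T)}"
proof (induction N arbitrary: T)
  case 0
  have "dim (m ` T) \<le> card {i. m i \<in> span (m ` T)}"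
  proof -
    have "dim (m ` T) \<le> card (m ` {i. m i \<in> span (m ` T)})"
      by (rule dim_le_card) (auto intro: span_base)
    also have "\<dots> \<le> card {i. m i \<in> span (m ` T)}" by (rule card_image_le) simp
    finally show ?thesis .
  qed
  then show ?case using 0 base_count[OF KEY k1R] by simp
next
  case (Suc N)
  show ?case
  proof (cases "k1 - 1 - dim (m ` T) \<le> N")
    case True
    then show ?thesis using Suc.IH by blast
  next
    case False
    define d where "d = dim (m ` T)"
    have dk: "d + 2 \<le> k1" using False Suc.prems d_def by linarith
    have rho: "k1 \<le> dim (range m)" by (rule rho_ge[OF KEY KW k1R])
    define U where "U = span (m ` T)"
    define E where "E i = span (m ` insert i T)" for i
    define Out where "Out = {i. m i \<notin> U}"
    have dimE: "dim (E i) = d + 1" if "i \<in> Out" for i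
      using that unfolding E_def Out_def U_def d_def by (simp add: dim_insert)
    have UE: "U \<subseteq> E i" for i unfolding U_def E_def by (intro span_mono) auto
    have mE: "m i \<in> E i" for i unfolding E_def by (intro span_base) auto
    have IHE: "card {i'. m i' \<in> E i} \<le> card {j. w j \<in> E i}" if "i \<in> Out" for i
    proof -
      have "k1 - 1 - dim (m ` insert i T) \<le> N"
        using dimE[OF that] unfolding E_def dim_span using Suc.prems d_def False by linarith
      then show ?thesis using Suc.IH[of "insert i T"] unfolding E_def by blast
    qed
    have KL: "E i = span (insert v (m ` T))" if "i \<in> Out" "v \<in> E i" "v \<notin> U" for i v
    proof -
      have sub: "span (insert v (m ` T)) \<subseteq> span (m ` insert i T)"
        using that UE unfolding E_def U_def
        by (intro span_minimal) (auto intro: span_base subspace_span)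
      have "dim (span (insert v (m ` T))) = d + 1"
        using that(3) unfolding U_def d_def by (simp add: dim_insert)
      then show ?thesis
        using subspace_dim_equal[OF subspace_span subspace_span sub] dimE[OF that(1)] unfolding E_def
        by (metis order_refl)
    qed
    have KL2: "E i = E i'" if "i \<in> Out" "i' \<in> Out" "v \<in> E i" "v \<in> E i'" "v \<notin> U" for i i' v
      using KL[OF that(1,3,5)] KL[OF that(2,4,5)] by simp
    define \<E> where "\<E> = E ` Out"
    define Ms where "Ms F = {i. m i \<in> F \<and> m i \<notin> U}" for F
    define Ws where "Ws F = {j. w j \<in> F \<and> w j \<notin> U}" for F
    define MU where "MU = card {i. m i \<in> U}"
    define WU where "WU = card {j. w j \<in> U}"
    have fE: "finite \<E>" unfolding \<E>_def by simp
    have cMF: "card {i. m i \<in> F} = MU + card (Ms F)" if "F \<in> \<E>" for F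
    proof -
      from that obtain i where "F = E i" unfolding \<E>_def by (rule imageE)
      then have "U \<subseteq> F" using UE by simp
      then have "{i. m i \<in> F} = {i. m i \<in> U} \<union> Ms F" unfolding Ms_def by auto
      moreover have "{i. m i \<in> U} \<inter> Ms F = {}" unfolding Ms_def by auto
      ultimately show ?thesis unfolding MU_def by (simp add: card_Un_disjoint)
    qed
    have cWF: "card {j. w j \<in> F} = WU + card (Ws F)" if "F \<in> \<E>" for F
    proof -
      from that obtain i where "F = E i" unfolding \<E>_def by (rule imageE)
      then have "U \<subseteq> F" using UE by simp
      then have "{j. w j \<in> F} = {j. w j \<in> U} \<union> Ws F" unfolding Ws_def by auto
      moreover have "{j. w j \<in> U} \<inter> Ws F = {}" unfolding Ws_def by auto
      ultimately show ?thesis unfolding WU_def by (simp add: card_Un_disjoint)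
    qed
    have disjM: "\<forall>F\<in>\<E>. \<forall>G\<in>\<E>. F \<noteq> G \<longrightarrow> Ms F \<inter> Ms G = {}"
      unfolding \<E>_def Ms_def using KL2 by blast
    have disjW: "\<forall>F\<in>\<E>. \<forall>G\<in>\<E>. F \<noteq> G \<longrightarrow> Ws F \<inter> Ws G = {}"
      unfolding \<E>_def Ws_def using KL2 by blast
    have unM: "(\<Union>F\<in>\<E>. Ms F) = Out"
      unfolding \<E>_def Ms_def Out_def using mE by auto
    have unW: "(\<Union>F\<in>\<E>. Ws F) \<subseteq> {j. w j \<notin> U}"
      unfolding Ws_def by auto
    have sumM: "(\<Sum>F\<in>\<E>. card (Ms F)) = card Out"
      using card_UN_disjoint[OF fE _ disjM] unM by simp
    have sumW: "(\<Sum>F\<in>\<E>. card (Ws F)) \<le> card {j. w j \<notin> U}"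
    proof -
      have "(\<Sum>F\<in>\<E>. card (Ws F)) = card (\<Union>F\<in>\<E>. Ws F)"
        using card_UN_disjoint[OF fE _ disjW] by simp
      also have "\<dots> \<le> card {j. w j \<notin> U}" by (rule card_mono[OF _ unW]) simp
      finally show ?thesis .
    qed
    have cOut: "card Out = CARD('j) - MU"
      unfolding Out_def MU_def using card_Diff_subset[of "{i. m i \<in> U}" UNIV] by (simp add: set_diff_eq)
    have cWo: "card {j. w j \<notin> U} = CARD('j) - WU"
      unfolding WU_def using card_Diff_subset[of "{j. w j \<in> U}" UNIV] by (simp add: set_diff_eq)
    have MUR: "MU \<le> CARD('j)" and WUR: "WU \<le> CARD('j)" unfolding MU_def WU_def by (auto intro: card_mono)
    have sumIH: "(\<Sum>F\<in>\<E>. MU + card (Ms F)) \<le> (\<Sum>F\<in>\<E>. WU + card (Ws F))"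
    proof (rule sum_mono)
      fix F assume F: "F \<in> \<E>"
      then obtain i where i': "F = E i" "i \<in> Out" unfolding \<E>_def by (rule imageE)
      then have i: "i \<in> Out" "F = E i" by auto
      show "MU + card (Ms F) \<le> WU + card (Ws F)"
        using IHE[OF i(1)] cMF[OF F] cWF[OF F] i(2) by simp
    qed
    define p where "p = card \<E>"
    have ineq: "p * MU + (CARD('j) - MU) \<le> p * WU + (CARD('j) - WU)"
      using sumIH sumM sumW cOut cWo unfolding p_def by (simp add: sum.distrib)
    have p2: "2 \<le> p"
    proof (rule ccontr)
      assume "\<not> 2 \<le> p"
      moreover have "Out \<noteq> {}"
      proof
        assume "Out = {}"
        then have "range m \<subseteq> U" unfolding Out_def by auto
        then have "dim (range m) \<le> dim U" by (rule dim_subset)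
        then show False using rho dk unfolding U_def d_def by simp
      qed
      then have "\<E> \<noteq> {}" unfolding \<E>_def by simp
      then have "p \<noteq> 0" using fE unfolding p_def by simp
      ultimately have "p = 1" by simp
      then obtain F where F: "\<E> = {F}" using card_1_singletonE unfolding p_def by blast
      have "F \<in> E ` Out" using F unfolding \<E>_def by simp
      then obtain i0 where i0': "F = E i0" "i0 \<in> Out" by (rule imageE)
      then have i0: "i0 \<in> Out" "F = E i0" by auto
      have "range m \<subseteq> F"
      proof
        fix v assume "v \<in> range m"
        then obtain i where v: "v = m i" by auto
        show "v \<in> F"
        proof (cases "i \<in> Out")
          case True
          then have "E i \<in> \<E>" unfolding \<E>_def by simp
          then have "E i = F" using F by simp
          then show ?thesis using mE v by auto
        next
          case False
          then show ?thesis using UE i0 v unfolding Out_def by auto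
        qed
      qed
      then have "dim (range m) \<le> dim F" by (rule dim_subset)
      then show False using dimE[OF i0(1)] i0 rho dk by simp
    qed
    have "MU \<le> WU"
    proof (rule ccontr)
      assume "\<not> MU \<le> WU"
      then have lt: "WU < MU" by simp
      have "(p - 1) * WU < (p - 1) * MU" using lt p2 by simp
      moreover have "p * MU = (p - 1) * MU + MU" "p * WU = (p - 1) * WU + WU"
        using p2 by (cases p; simp)+
      ultimately show False using ineq MUR WUR lt by linarith
    qed
    then show ?thesis unfolding MU_def WU_def U_def .
  qed
qed

lemma perm_exists:
  fixes w m :: "'j::finite \<Rightarrow> 'a::euclidean_space"
  assumes KEY: "\<forall>z. min (card {j. z \<bullet> w j \<noteq> 0}) (CARD('j) + 2 - k1) \<le> card {i. z \<bullet> m i \<noteq> 0}"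
    and KW: "\<forall>S. card S \<le> k1 \<longrightarrow> inj_on w S \<and> independent (w ` S)"
    and k1: "2 \<le> k1" and k1R: "k1 \<le> CARD('j)"
  shows "\<exists>\<pi> c. bij \<pi> \<and> (\<forall>i. c i \<noteq> 0 \<and> m i = c i *\<^sub>R w (\<pi> i))"
proof -
  have claim: "card {i'. m i' \<in> span (m ` T)} \<le> card {j. w j \<in> span (m ` T)}" for T
    using JS[OF KEY KW k1R, of T k1] by simp
  have wnz: "w j \<noteq> 0" for j
  proof
    assume "w j = 0"
    moreover have "independent (w ` {j})" using KW[rule_format, of "{j}"] k1 by simp
    ultimately show False using dependent_zero by auto
  qed
  have ex: "\<exists>j. w j \<in> span {m i}" for i
  proof -
    have "1 \<le> card {i'. m i' \<in> span {m i}}"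
    proof -
      have "i \<in> {i'. m i' \<in> span {m i}}" by (simp add: span_base)
      then show ?thesis by (metis card_0_eq empty_iff finite less_one not_le)
    qed
    then have "1 \<le> card {j. w j \<in> span {m i}}" using claim[of "{i}"] by simp
    then show ?thesis by (metis (mono_tags, lifting) Collect_empty_eq card.empty not_one_le_zero)
  qed
  define \<pi> where "\<pi> i = (SOME j. w j \<in> span {m i})" for i
  have \<pi>: "w (\<pi> i) \<in> span {m i}" for i unfolding \<pi>_def using ex by (rule someI_ex)
  have rel: "\<exists>c. c \<noteq> 0 \<and> m i = c *\<^sub>R w (\<pi> i)" for i
  proof -
    obtain k where k: "w (\<pi> i) = k *\<^sub>R m i" using \<pi>[of i] by (auto simp: span_singleton)
    then have "k \<noteq> 0" using wnz by auto
    then show ?thesis using k by (intro exI[of _ "inverse k"]) simp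
  qed
  have inj: "inj \<pi>"
  proof (rule injI, rule ccontr)
    fix i i' assume eq: "\<pi> i = \<pi> i'" and ne: "i \<noteq> i'"
    let ?L = "span {m i}"
    obtain c' where c': "c' \<noteq> 0" "m i' = c' *\<^sub>R w (\<pi> i')" using rel by blast
    have "m i' \<in> ?L" using c' eq \<pi>[of i] by (simp add: span_mul)
    then have "{i, i'} \<subseteq> {i''. m i'' \<in> ?L}" by (auto simp: span_base)
    then have "2 \<le> card {i''. m i'' \<in> ?L}"
      using ne by (metis card_2_iff card_mono finite)
    then have c2: "2 \<le> card {j. w j \<in> ?L}" using claim[of "{i}"] by simp
    have "card {j. w j \<in> ?L} \<le> 1"
    proof -
      have "\<forall>j1\<in>{j. w j \<in> ?L}. \<forall>j2\<in>{j. w j \<in> ?L}. j1 = j2"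
      proof (intro ballI, rule ccontr)
        fix j1 j2 assume j: "j1 \<in> {j. w j \<in> ?L}" "j2 \<in> {j. w j \<in> ?L}" "j1 \<noteq> j2"
        have "card {j1, j2} \<le> k1" using j k1 by simp
        then have "inj_on w {j1, j2}" "independent (w ` {j1, j2})" using KW by blast+
        moreover have "w ` {j1, j2} \<subseteq> ?L" using j by auto
        ultimately have "card (w ` {j1, j2}) \<le> dim ?L" using independent_card_le_dim by blast
        moreover have "card (w ` {j1, j2}) = 2" using \<open>inj_on w {j1, j2}\<close> j(3) by (simp add: card_image)
        moreover have "dim ?L \<le> 1" by simp
        ultimately show False by simp
      qed
      then show ?thesis using card_le_Suc0_iff_eq[of "{j. w j \<in> ?L}"] by simp
    qed
    then show False using c2 by simp
  qed
  then have "bij \<pi>" using finite_UNIV_inj_surj[of \<pi>] by (simp add: bij_def)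
  moreover obtain c where "\<forall>i. c i \<noteq> 0 \<and> m i = c i *\<^sub>R w (\<pi> i)" using rel by metis
  ultimately show ?thesis by blast
qed

lemma krank_props:
  fixes A :: "real^'c^'m"
  shows "krank A \<le> CARD('c)"
    and "\<forall>S. card S \<le> krank A \<longrightarrow> inj_on (\<lambda>j. column j A) S \<and> independent ((\<lambda>j. column j A) ` S)"
proof -
  let ?K = "{k. k \<le> CARD('c) \<and> (\<forall>S::'c set. card S = k \<longrightarrow>
        inj_on (\<lambda>j. column j A) S \<and> independent ((\<lambda>j. column j A) ` S))}"
  have fin: "finite ?K" by (rule finite_subset[of _ "{..CARD('c)}"]) auto
  have "0 \<in> ?K" by (auto simp: independent_empty)
  then have ne: "?K \<noteq> {}" by blast
  have mem: "krank A \<in> ?K" unfolding krank_def using Max_in[OF fin ne] .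
  then show le: "krank A \<le> CARD('c)" by simp
  show "\<forall>S. card S \<le> krank A \<longrightarrow> inj_on (\<lambda>j. column j A) S \<and> independent ((\<lambda>j. column j A) ` S)"
  proof (intro allI impI)
    fix S :: "'c set" assume S: "card S \<le> krank A"
    have "krank A - card S \<le> card (UNIV - S)"
      using le card_Diff_subset[of S UNIV] by simp
    then obtain T where T: "T \<subseteq> UNIV - S" "card T = krank A - card S"
      using obtain_subset_with_card_n by metis
    have "card (S \<union> T) = krank A" using T S by (subst card_Un_disjoint) auto
    then have "inj_on (\<lambda>j. column j A) (S \<union> T) \<and> independent ((\<lambda>j. column j A) ` (S \<union> T))"
      using mem by blast
    then show "inj_on (\<lambda>j. column j A) S \<and> independent ((\<lambda>j. column j A) ` S)"
      by (meson Un_upper1 image_mono independent_mono inj_on_subset)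
  qed
qed

lemma column_transpose_row: "column j (transpose A) = A $ j"
  by (simp add: column_def transpose_def vec_eq_iff)

lemma hpnn2_scalar:
  fixes W1 :: "real^'d0^'d1" and W2 :: "real^'d1^'d2"
  shows "l \<bullet> hpnn2 W1 W2 r x = (\<Sum>j\<in>UNIV. (l \<bullet> column j W2) * (W1 $ j \<bullet> x) ^ r)"
proof -
  have "l \<bullet> hpnn2 W1 W2 r x = (\<Sum>k\<in>UNIV. l $ k * (\<Sum>j\<in>UNIV. W2 $ k $ j * (W1 $ j \<bullet> x) ^ r))"
    unfolding hpnn2_def rho_def by (simp add: inner_vec_def matrix_vector_mult_def)
  also have "\<dots> = (\<Sum>j\<in>UNIV. (\<Sum>k\<in>UNIV. l $ k * W2 $ k $ j) * (W1 $ j \<bullet> x) ^ r)"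
  proof -
    have "(\<Sum>k\<in>UNIV. l $ k * (\<Sum>j\<in>UNIV. W2 $ k $ j * (W1 $ j \<bullet> x) ^ r)) =
          (\<Sum>k\<in>UNIV. \<Sum>j\<in>UNIV. l $ k * (W2 $ k $ j * (W1 $ j \<bullet> x) ^ r))"
      by (simp only: sum_distrib_left)
    also have "\<dots> = (\<Sum>j\<in>UNIV. \<Sum>k\<in>UNIV. l $ k * (W2 $ k $ j * (W1 $ j \<bullet> x) ^ r))"
      by (rule sum.swap)
    also have "\<dots> = (\<Sum>j\<in>UNIV. (\<Sum>k\<in>UNIV. l $ k * W2 $ k $ j) * (W1 $ j \<bullet> x) ^ r)"
      by (simp only: sum_distrib_right mult.assoc)
    finally show ?thesis .
  qed
  also have "\<dots> = (\<Sum>j\<in>UNIV. (l \<bullet> column j W2) * (W1 $ j \<bullet> x) ^ r)"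
    by (simp add: inner_vec_def column_def)
  finally show ?thesis .
qed

theorem mainTheorem14:
  fixes W1 :: "real^'d0^'d1" and W2 :: "real^'d1^'d2" and r :: nat
  assumes "CARD('d0) \<ge> 2" and "CARD('d1) \<ge> 2" and "CARD('d2) \<ge> 2"
    and "r \<ge> 2"
    and "krank W2 \<ge> 2" and "krank (transpose W1) \<ge> 2"
    and "int r \<ge> 2 * \<lceil>(2 * real CARD('d1) - real (krank W2)) /
                          (2 * real (krank (transpose W1)) - 2)\<rceil>"
  shows "hpnn2_unique r W1 W2"
  unfolding hpnn2_unique_def
proof (intro allI impI)
  fix W1' :: "real^'d0^'d1" and W2' :: "real^'d1^'d2"
  assume eq: "hpnn2 W1' W2' r = hpnn2 W1 W2 r"
  define k1 where "k1 = krank (transpose W1)"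
  define k2 where "k2 = krank W2"
  define w where "w j = W1 $ j" for j
  define m where "m j = W1' $ j" for j
  define a where "a j = column j W2" for j
  define b where "b j = column j W2'" for j
  have k1: "2 \<le> k1" and k2: "2 \<le> k2" using assms k1_def k2_def by auto
  have k1R: "k1 \<le> CARD('d1)" unfolding k1_def by (rule krank_props(1))
  have k2R: "k2 \<le> CARD('d1)" unfolding k2_def by (rule krank_props(1))
  have KW: "\<forall>S. card S \<le> k1 \<longrightarrow> inj_on w S \<and> independent (w ` S)"
  proof -
    have e: "(\<lambda>j. column j (transpose W1)) = w" by (simp add: fun_eq_iff w_def row_def vec_eq_iff)
    show ?thesis using krank_props(2)[of "transpose W1"] unfolding e k1_def .
  qed
  have KA: "\<forall>S. card S \<le> k2 \<longrightarrow> inj_on a S \<and> independent (a ` S)"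
  proof -
    have e: "(\<lambda>j. column j W2) = a" by (simp add: fun_eq_iff a_def)
    show ?thesis using krank_props(2)[of W2] unfolding e k2_def .
  qed
  have ID: "\<forall>l x. (\<Sum>j\<in>UNIV. (l \<bullet> a j) * (w j \<bullet> x) ^ r) = (\<Sum>j\<in>UNIV. (l \<bullet> b j) * (m j \<bullet> x) ^ r)"
  proof (intro allI)
    fix l x
    have "l \<bullet> hpnn2 W1 W2 r x = l \<bullet> hpnn2 W1' W2' r x" using eq by simp
    then show "(\<Sum>j\<in>UNIV. (l \<bullet> a j) * (w j \<bullet> x) ^ r) = (\<Sum>j\<in>UNIV. (l \<bullet> b j) * (m j \<bullet> x) ^ r)"
      unfolding hpnn2_scalar a_def b_def w_def m_def .
  qed
  have rk: "2 * CARD('d1) \<le> r * (k1 - 1) + k2"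
  proof -
    define X where "X = (2 * real CARD('d1) - real k2) / (2 * real k1 - 2)"
    have "real_of_int (int r) \<ge> 2 * real_of_int \<lceil>X\<rceil>"
      using assms(7) unfolding X_def k1_def k2_def by linarith
    moreover have "X \<le> real_of_int \<lceil>X\<rceil>" by (rule le_of_int_ceiling)
    ultimately have h: "real r \<ge> 2 * X" by linarith
    have pos: "2 * real k1 - 2 > 0" using k1 by simp
    have "2 * X * (2 * real k1 - 2) = 2 * (2 * real CARD('d1) - real k2)"
      unfolding X_def using pos by (simp add: field_simps)
    moreover have "2 * X * (2 * real k1 - 2) \<le> real r * (2 * real k1 - 2)"
      using h pos by (intro mult_right_mono) auto
    ultimately have "2 * real CARD('d1) - real k2 \<le> real r * (real k1 - 1)" by (simp add: algebra_simps)
    moreover have "real (k1 - 1) = real k1 - 1" using k1 by (simp add: of_nat_diff)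
    ultimately have "real (2 * CARD('d1)) \<le> real (r * (k1 - 1) + k2)" by simp
    then show ?thesis by (simp only: of_nat_le_iff)
  qed
  have KEY: "\<forall>z. min (card {j. z \<bullet> w j \<noteq> 0}) (CARD('d1) + 2 - k1) \<le> card {i. z \<bullet> m i \<noteq> 0}"
    using KEY_w[OF ID KW KA k1 k2 k1R k2R rk] by blast
  obtain \<pi> c where \<pi>: "bij \<pi>" and c: "\<forall>i. c i \<noteq> 0 \<and> m i = c i *\<^sub>R w (\<pi> i)"
    using perm_exists[OF KEY KW k1 k1R] by blast
  have injp: "inj \<pi>" using \<pi> bij_is_inj by blast
  have coef: "W2 $ k $ (\<pi> i) = W2' $ k $ i * c i ^ r" for k i
  proof -
    define D where "D j = a j $ k - b (inv \<pi> j) $ k * c (inv \<pi> j) ^ r" for j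
    have comp: "\<forall>x. (\<Sum>j\<in>UNIV. a j $ k * (w j \<bullet> x) ^ r) = (\<Sum>j\<in>UNIV. b j $ k * (m j \<bullet> x) ^ r)"
      using ID[rule_format, of "axis k 1"] by (simp add: inner_axis')
    have "\<forall>x. (\<Sum>j\<in>UNIV. D j * (w j \<bullet> x) ^ r) = 0"
    proof
      fix x
      have "(\<Sum>j\<in>UNIV. b j $ k * (m j \<bullet> x) ^ r) =
            (\<Sum>i\<in>UNIV. (\<lambda>j. b (inv \<pi> j) $ k * c (inv \<pi> j) ^ r * (w j \<bullet> x) ^ r) (\<pi> i))"
        using c by (simp add: inv_f_f[OF injp] power_mult_distrib mult.assoc)
      also have "\<dots> = (\<Sum>j\<in>UNIV. b (inv \<pi> j) $ k * c (inv \<pi> j) ^ r * (w j \<bullet> x) ^ r)"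
        by (rule sum.reindex_bij_betw) (use \<pi> in \<open>simp add: bij_def\<close>)
      finally have "(\<Sum>j\<in>UNIV. b j $ k * (m j \<bullet> x) ^ r) =
            (\<Sum>j\<in>UNIV. b (inv \<pi> j) $ k * c (inv \<pi> j) ^ r * (w j \<bullet> x) ^ r)" .
      then show "(\<Sum>j\<in>UNIV. D j * (w j \<bullet> x) ^ r) = 0"
        using comp[rule_format, of x] unfolding D_def by (simp add: left_diff_distrib sum_subtractf)
    qed
    moreover have "card (UNIV :: 'd1 set) \<le> r * (k1 - 1) + 1" using rk k2R by linarith
    ultimately have "\<forall>j\<in>UNIV. D j = 0" using IND[OF KW, where n=r and S=UNIV and c=D] k1 by auto
    then have "D (\<pi> i) = 0" by simp
    then show ?thesis unfolding D_def a_def b_def using inv_f_f[OF injp] by (simp add: column_def)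
  qed
  define d :: "real^'d1" where "d = (\<chi> l. c (inv \<pi> l))"
  define P :: "real^'d1^'d1" where "P = (\<chi> i j. if j = \<pi> i then 1 else 0)"
  have dpi: "d $ (\<pi> i) = c i" for i unfolding d_def by (simp add: inv_f_f[OF injp])
  have pp: "\<pi> permutes UNIV" by (rule bij_imp_permutes) (use \<pi> in auto)
  have perm: "perm_matrix P"
    unfolding perm_matrix_def P_def using pp by blast
  have dnz: "\<forall>i. d $ i \<noteq> 0" unfolding d_def using c by simp
  have PD: "(P ** diagm d) $ i $ l = (if l = \<pi> i then d $ l else 0)" for i l
  proof -
    have "(P ** diagm d) $ i $ l = (\<Sum>m\<in>UNIV. if m = \<pi> i then (if m = l then d $ m else 0) else 0)"
      unfolding P_def diagm_def matrix_matrix_mult_def by (simp only: vec_lambda_beta, rule sum.cong, auto)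
    also have "\<dots> = (if l = \<pi> i then d $ l else 0)" by (subst sum.delta) auto
    finally show ?thesis .
  qed
  have E1: "W1' = P ** diagm d ** W1"
  proof -
    have "(P ** diagm d ** W1) $ i $ k = W1' $ i $ k" for i k
    proof -
      have "(P ** diagm d ** W1) $ i $ k = (\<Sum>l\<in>UNIV. (P ** diagm d) $ i $ l * W1 $ l $ k)"
        by (simp add: matrix_matrix_mult_def)
      also have "\<dots> = (\<Sum>l\<in>UNIV. if l = \<pi> i then d $ l * W1 $ l $ k else 0)" unfolding PD
        by (intro sum.cong) auto
      also have "\<dots> = d $ (\<pi> i) * W1 $ (\<pi> i) $ k" by (subst sum.delta) auto
      also have "\<dots> = W1' $ i $ k"
      proof -
        have "W1' $ i = c i *\<^sub>R W1 $ (\<pi> i)" using c unfolding m_def w_def by blast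
        then show ?thesis using dpi[of i] by simp
      qed
      finally show ?thesis .
    qed
    then show ?thesis by (simp add: vec_eq_iff)
  qed
  have E2: "W2' = W2 ** diagm (\<chi> i. inverse (d $ i) ^ r) ** transpose P"
  proof -
    have "(W2 ** diagm (\<chi> i. inverse (d $ i) ^ r) ** transpose P) $ k $ i = W2' $ k $ i" for k i
    proof -
      have A: "(W2 ** diagm (\<chi> i. inverse (d $ i) ^ r)) $ k $ l = W2 $ k $ l * inverse (d $ l) ^ r" for l
      proof -
        have "(W2 ** diagm (\<chi> i. inverse (d $ i) ^ r)) $ k $ l =
              (\<Sum>m\<in>UNIV. if m = l then W2 $ k $ m * inverse (d $ m) ^ r else 0)"
          unfolding diagm_def matrix_matrix_mult_def by (simp only: vec_lambda_beta, rule sum.cong, auto)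
        also have "\<dots> = W2 $ k $ l * inverse (d $ l) ^ r" by (subst sum.delta) auto
        finally show ?thesis .
      qed
      have "(W2 ** diagm (\<chi> i. inverse (d $ i) ^ r) ** transpose P) $ k $ i =
            (\<Sum>l\<in>UNIV. (W2 ** diagm (\<chi> i. inverse (d $ i) ^ r)) $ k $ l * transpose P $ l $ i)"
        by (simp add: matrix_matrix_mult_def)
      also have "\<dots> = W2 $ k $ (\<pi> i) * inverse (d $ (\<pi> i)) ^ r"
      proof -
        have "(\<Sum>l\<in>UNIV. (W2 ** diagm (\<chi> i. inverse (d $ i) ^ r)) $ k $ l * transpose P $ l $ i) =
              (\<Sum>l\<in>UNIV. if l = \<pi> i then W2 $ k $ l * inverse (d $ l) ^ r else 0)"
          unfolding A P_def transpose_def by (intro sum.cong) auto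
        also have "\<dots> = W2 $ k $ (\<pi> i) * inverse (d $ (\<pi> i)) ^ r" by (subst sum.delta) auto
        finally show ?thesis .
      qed
      also have "\<dots> = W2' $ k $ i" using coef[of k i] dpi[of i] c by (simp add: power_inverse)
      finally show ?thesis .
    qed
    then show ?thesis by (simp add: vec_eq_iff)
  qed
  show "hpnn2_equiv r W1' W2' W1 W2"
    unfolding hpnn2_equiv_def using perm dnz E1 E2 by blast
qed

end
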